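(* Let $t\in\mathbb{Z}_+$ and let agent $i$ have binary values $v_i(g)\in\{0,1\}$ and quantile $\tau_i=\frac{t}{t+1}$. Let $B\subseteq M$ be a bundle containing exactly $\ell$ items of value $1$ for $i$. Then $v_i(B)=1$ if and only if the number of items in $B$ of value $0$ for $i$ is at most $\ell t-1$.
   Context: For a nonempty bundle $S\subseteq M$, order its items as $g_1,\dots,g_{|S|}$ with $v_i(g_1)\le\dots\le v_i(g_{|S|})$; then $v_i(S)=v_i(g_{\lceil \tau_i|S|\rceil})$ if $\tau_i>0$ and $v_i(S)=v_i(g_1)$ if $\tau_i=0$. *)

theory Defs
  imports Complex_Main "HOL-Library.Multiset"
begin

text \<open>Values of the items of a finite nonempty bundle S, sorted ascendingly
  (with multiplicity): the i-th entry (0-based) is v(g_(i+1)).\<close>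
definition sorted_values :: "('a \<Rightarrow> real) \<Rightarrow> 'a set \<Rightarrow> real list" where
  "sorted_values v S = sorted_list_of_multiset (image_mset v (mset_set S))"

text \<open>Quantile value of a nonempty bundle: v(g_{ceil(tau |S|)}) if tau > 0,
  and v(g_1) if tau = 0 (1-based indices as in the paper).\<close>
definition quantile_value :: "('a \<Rightarrow> real) \<Rightarrow> real \<Rightarrow> 'a set \<Rightarrow> real" where
  "quantile_value v \<tau> S =
     (if \<tau> > 0 then sorted_values v S ! (nat \<lceil>\<tau> * real (card S)\<rceil> - 1)
      else sorted_values v S ! 0)"

end

theory Submission
  imports Defs
begin

lemma nth_zeros_ones:
  "k < z + l \<Longrightarrow> ((replicate z (0::real) @ replicate l 1) ! k = 1) \<longleftrightarrow> z \<le> k"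
  by (auto simp: nth_append)

theorem lemma2:
  fixes v :: "'a \<Rightarrow> real" and M B :: "'a set" and t l :: nat
  assumes "t > 0"
    and "finite M"
    and "B \<subseteq> M"
    and "B \<noteq> {}"
    and "\<forall>g\<in>M. v g \<in> {0, 1}"
    and "card {g \<in> B. v g = 1} = l"
  shows "quantile_value v (real t / (real t + 1)) B = 1 \<longleftrightarrow>
         int (card {g \<in> B. v g = 0}) \<le> int l * int t - 1"
proof -
  define z where "z = card {g \<in> B. v g = 0}"
  have fin: "finite B" using assms(2,3) finite_subset by blast
  have Bun: "B = {g \<in> B. v g = 0} \<union> {g \<in> B. v g = 1}" using assms(3,5) by auto
  have disj: "{g \<in> B. v g = 0} \<inter> {g \<in> B. v g = 1} = {}" by auto
  have cardB: "card B = z + l"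
  proof -
    have "card B = card ({g \<in> B. v g = 0} \<union> {g \<in> B. v g = 1})" using Bun by simp
    also have "\<dots> = z + l" using card_Un_disjoint[OF _ _ disj] fin assms(6) z_def by simp
    finally show ?thesis .
  qed
  have m0: "image_mset v (mset_set {g \<in> B. v g = 0}) = replicate_mset z 0"
  proof -
    have "image_mset v (mset_set {g \<in> B. v g = 0}) = image_mset (\<lambda>_. 0) (mset_set {g \<in> B. v g = 0})"
      by (rule image_mset_cong) (use fin in auto)
    then show ?thesis by (simp add: image_mset_const_eq z_def)
  qed
  have m1: "image_mset v (mset_set {g \<in> B. v g = 1}) = replicate_mset l 1"
  proof -
    have "image_mset v (mset_set {g \<in> B. v g = 1}) = image_mset (\<lambda>_. 1) (mset_set {g \<in> B. v g = 1})"
      by (rule image_mset_cong) (use fin in auto)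
    then show ?thesis by (simp add: image_mset_const_eq assms(6))
  qed
  have e1: "image_mset v (mset_set B) = replicate_mset z 0 + replicate_mset l 1"
  proof -
    have "mset_set B = mset_set {g \<in> B. v g = 0} + mset_set {g \<in> B. v g = 1}"
      using mset_set_Union[OF _ _ disj] fin Bun by (metis finite_Un)
    then show ?thesis using m0 m1 by simp
  qed
  have e2: "mset (replicate z (0::real) @ replicate l 1) = replicate_mset z 0 + replicate_mset l 1"
    by simp
  have srt: "sorted (replicate z (0::real) @ replicate l 1)"
    by (auto simp: sorted_append)
  have sv: "sorted_values v B = replicate z (0::real) @ replicate l 1"
    unfolding sorted_values_def e1 e2[symmetric] sorted_list_of_multiset_mset
    using srt by (rule sorted_sort_id)
  define x where "x = real t * real (z + l) / (real t + 1)"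
  have tau: "real t / (real t + 1) * real (card B) = x" unfolding x_def cardB by simp
  have n1: "z + l \<ge> 1" using cardB fin assms(4) by (metis card_0_eq less_one not_le)
  have xpos: "x > 0" unfolding x_def using assms(1) n1 by (simp add: divide_pos_pos)
  have xle: "x \<le> real (z + l)" unfolding x_def by (simp add: field_simps)
  have c1: "\<lceil>x\<rceil> \<ge> 1" using xpos by (simp add: order.strict_implies_order zero_less_ceiling)
  have c2: "\<lceil>x\<rceil> \<le> int (z + l)" using xle by (simp add: ceiling_le_iff)
  define k where "k = nat \<lceil>x\<rceil> - 1"
  have klt: "k < z + l" unfolding k_def using c1 c2 by linarith
  have "z \<le> k \<longleftrightarrow> int z + 1 \<le> \<lceil>x\<rceil>" unfolding k_def using c1 by linarith
  also have "\<dots> \<longleftrightarrow> real z < x" by (simp add: le_ceiling_iff)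
  also have "\<dots> \<longleftrightarrow> real z * (real t + 1) < real t * real (z + l)"
    unfolding x_def by (simp add: field_simps)
  also have "\<dots> \<longleftrightarrow> real z < real l * real t" by (simp add: algebra_simps)
  also have "\<dots> \<longleftrightarrow> int z \<le> int l * int t - 1"
    by (metis int_ops(7) of_nat_less_iff of_nat_mult zle_diff1_eq)
  finally have key: "z \<le> k \<longleftrightarrow> int z \<le> int l * int t - 1" .
  have pos: "real t / (real t + 1) > 0" using assms(1) by simp
  have "quantile_value v (real t / (real t + 1)) B = (replicate z (0::real) @ replicate l 1) ! k"
    unfolding quantile_value_def using pos sv tau k_def by simp
  then show ?thesis using nth_zeros_ones[OF klt] key z_def by simp
qed

end
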